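(* Let $(X,\kappa)$ be a digital image and let $m$ be a positive integer. Then $(X,\kappa)$ has both the digital fixed point property with respect to $[0,m]_{\mathbb{Z}}$ and the digital homotopy fixed point property if and only if $X$ is a singleton.
   Context: A digital image is a pair $(X,\kappa)$ with $X \subset \mathbb{Z}^n$ and $\kappa$ an adjacency relation on $X$. For integers $a<b$, $[a,b]_{\mathbb{Z}} = \{z \in \mathbb{Z} : a \le z \le b\}$ with $2$-adjacency (consecutive integers adjacent). A function $f:(X,\kappa)\to(Y,\lambda)$ is $(\kappa,\lambda)$-continuous if whenever $x \leftrightarrow_\kappa x'$ we have $f(x)=f(x')$ or $f(x)\leftrightarrow_\lambda f(x')$. A $\kappa$-path is a $(2,\kappa)$-continuous function $p:[0,m]_{\mathbb{Z}} \to X$. The normal product adjacency $\kappa_*$ on $X \times [0,m]_{\mathbb{Z}}$: $(x,s) \leftrightarrow_{\kappa_*} (x',s')$ iff ($x \leftrightarrow_\kappa x'$ and $s=s'$) or ($x=x'$ and $|s-s'|=1$) or ($x \leftrightarrow_\kappa x'$ and $|s-s'|=1$). For $f: X \times [0,m]_{\mathbb{Z}} \to X$ and $t \in [0,m]_{\mathbb{Z}}$, $f_t: X\to X$ is $f_t(x)=f(x,t)$. $(X,\kappa)$ has the digital fixed point property with respect to $[0,m]_{\mathbb{Z}}$ if for every $(\kappa_*,\kappa)$-continuous $f: X \times [0,m]_{\mathbb{Z}} \to X$ there is a $\kappa$-path $p:[0,m]_{\mathbb{Z}} \to X$ with $f_t(p(t)) = p(t)$ for all $t$. A digital homotopy is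 a function $F: X \times [0,m]_{\mathbb{Z}} \to X$ ($m \in \mathbb{N}$) such that each $F_t$ is $(\kappa,\kappa)$-continuous and each $t \mapsto F(x,t)$ is $(2,\kappa)$-continuous. $(X,\kappa)$ has the digital homotopy fixed point property if for every digital homotopy $F: X \times [0,m]_{\mathbb{Z}} \to X$ (any $m$) there is a $\kappa$-path $p:[0,m]_{\mathbb{Z}}\to X$ with $F_t(p(t))=p(t)$ for all $t \in [0,m]_{\mathbb{Z}}$. *)

theory Defs
  imports "HOL-Analysis.Analysis"
begin

definition adjacency_on :: "(int ^ 'n) set \<Rightarrow> (int ^ 'n \<Rightarrow> int ^ 'n \<Rightarrow> bool) \<Rightarrow> bool" where
  "adjacency_on X \<kappa> \<longleftrightarrow>
     (\<forall>x y. \<kappa> x y \<longrightarrow> x \<in> X \<and> y \<in> X \<and> x \<noteq> y \<and> \<kappa> y x)"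

definition adj2 :: "int \<Rightarrow> int \<Rightarrow> bool" where
  "adj2 s t \<longleftrightarrow> \<bar>s - t\<bar> = 1"

definition digitally_continuous ::
  "'a set \<Rightarrow> ('a \<Rightarrow> 'a \<Rightarrow> bool) \<Rightarrow> 'b set \<Rightarrow> ('b \<Rightarrow> 'b \<Rightarrow> bool) \<Rightarrow> ('a \<Rightarrow> 'b) \<Rightarrow> bool" where
  "digitally_continuous X \<kappa> Y lam f \<longleftrightarrow>
     f ` X \<subseteq> Y \<and>
     (\<forall>x\<in>X. \<forall>x'\<in>X. \<kappa> x x' \<longrightarrow> f x = f x' \<or> lam (f x) (f x'))"

definition digital_path :: "'a set \<Rightarrow> ('a \<Rightarrow> 'a \<Rightarrow> bool) \<Rightarrow> int \<Rightarrow> (int \<Rightarrow> 'a) \<Rightarrow> bool" where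
  "digital_path X \<kappa> m p \<longleftrightarrow> digitally_continuous {0..m} adj2 X \<kappa> p"

definition normal_prod_adj :: "('a \<Rightarrow> 'a \<Rightarrow> bool) \<Rightarrow> 'a \<times> int \<Rightarrow> 'a \<times> int \<Rightarrow> bool" where
  "normal_prod_adj \<kappa> p q \<longleftrightarrow>
     (case p of (x, s) \<Rightarrow> case q of (x', s') \<Rightarrow>
        (\<kappa> x x' \<and> s = s') \<or> (x = x' \<and> \<bar>s - s'\<bar> = 1) \<or> (\<kappa> x x' \<and> \<bar>s - s'\<bar> = 1))"

definition fpp_wrt_interval :: "'a set \<Rightarrow> ('a \<Rightarrow> 'a \<Rightarrow> bool) \<Rightarrow> int \<Rightarrow> bool" where
  "fpp_wrt_interval X \<kappa> m \<longleftrightarrow>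
     (\<forall>f. digitally_continuous (X \<times> {0..m}) (normal_prod_adj \<kappa>) X \<kappa> f \<longrightarrow>
        (\<exists>p. digital_path X \<kappa> m p \<and> (\<forall>t\<in>{0..m}. f (p t, t) = p t)))"

definition digital_homotopy :: "'a set \<Rightarrow> ('a \<Rightarrow> 'a \<Rightarrow> bool) \<Rightarrow> int \<Rightarrow> ('a \<times> int \<Rightarrow> 'a) \<Rightarrow> bool" where
  "digital_homotopy X \<kappa> m F \<longleftrightarrow>
     (\<forall>t\<in>{0..m}. digitally_continuous X \<kappa> X \<kappa> (\<lambda>x. F (x, t))) \<and>
     (\<forall>x\<in>X. digitally_continuous {0..m} adj2 X \<kappa> (\<lambda>t. F (x, t)))"

definition homotopy_fpp :: "'a set \<Rightarrow> ('a \<Rightarrow> 'a \<Rightarrow> bool) \<Rightarrow> bool" where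
  "homotopy_fpp X \<kappa> \<longleftrightarrow>
     (\<forall>m::int. m \<ge> 1 \<longrightarrow> (\<forall>F. digital_homotopy X \<kappa> m F \<longrightarrow>
        (\<exists>p. digital_path X \<kappa> m p \<and> (\<forall>t\<in>{0..m}. F (p t, t) = p t))))"

end

theory Submission
  imports Defs
begin

lemma no_fix_map:
  fixes X :: "'a set"
  assumes adj: "\<forall>x y. \<kappa> x y \<longrightarrow> x \<in> X \<and> y \<in> X \<and> x \<noteq> y \<and> \<kappa> y x"
    and x0: "x0 \<in> X" and x1: "x1 \<in> X" and ne: "x0 \<noteq> x1"
  shows "\<exists>g. digitally_continuous X \<kappa> X \<kappa> g \<and> (\<forall>x\<in>X. g x \<noteq> x)"
proof (cases "\<exists>a b. \<kappa> a b")
  case True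
  then obtain a b where ab: "\<kappa> a b" by blast
  with adj have abX: "a \<in> X" "b \<in> X" "a \<noteq> b" "\<kappa> b a" by auto
  define g where "g = (\<lambda>x. if x = a then b else a)"
  have "digitally_continuous X \<kappa> X \<kappa> g"
    unfolding digitally_continuous_def g_def using abX ab by auto
  moreover have "\<forall>x\<in>X. g x \<noteq> x" unfolding g_def using abX by auto
  ultimately show ?thesis by blast
next
  case False
  define g where "g = (\<lambda>x. if x = x0 then x1 else x0)"
  have "digitally_continuous X \<kappa> X \<kappa> g"
    unfolding digitally_continuous_def g_def using False x0 x1 by auto
  moreover have "\<forall>x\<in>X. g x \<noteq> x" unfolding g_def using ne by auto
  ultimately show ?thesis by blast
qed

theorem mainTheorem3:
  fixes X :: "(int ^ 'n) set" and \<kappa> :: "int ^ 'n \<Rightarrow> int ^ 'n \<Rightarrow> bool" and m :: int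
  assumes "adjacency_on X \<kappa>" and "m \<ge> 1"
  shows "(fpp_wrt_interval X \<kappa> m \<and> homotopy_fpp X \<kappa>) \<longleftrightarrow> (\<exists>x. X = {x})"
proof
  assume H: "fpp_wrt_interval X \<kappa> m \<and> homotopy_fpp X \<kappa>"
  have adj: "\<forall>x y. \<kappa> x y \<longrightarrow> x \<in> X \<and> y \<in> X \<and> x \<noteq> y \<and> \<kappa> y x"
    using assms(1) unfolding adjacency_on_def by blast
  have F: "\<And>f. digitally_continuous (X \<times> {0..m}) (normal_prod_adj \<kappa>) X \<kappa> f \<Longrightarrow>
        (\<exists>p. digital_path X \<kappa> m p \<and> (\<forall>t\<in>{0..m}. f (p t, t) = p t))"
    using H unfolding fpp_wrt_interval_def by blast
  have m0: "(0::int) \<in> {0..m}" using assms(2) by auto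
  have nonempty: "X \<noteq> {}"
  proof
    assume "X = {}"
    have "digitally_continuous (X \<times> {0..m}) (normal_prod_adj \<kappa>) X \<kappa> (\<lambda>_. undefined)"
      unfolding digitally_continuous_def using \<open>X = {}\<close> by auto
    then obtain p where "digital_path X \<kappa> m p" using F by blast
    then have "p 0 \<in> X" using m0 unfolding digital_path_def digitally_continuous_def by auto
    with \<open>X = {}\<close> show False by auto
  qed
  show "\<exists>x. X = {x}"
  proof (rule ccontr)
    assume ns: "\<not> (\<exists>x. X = {x})"
    from nonempty obtain x0 where x0: "x0 \<in> X" by blast
    with ns obtain x1 where x1: "x1 \<in> X" "x1 \<noteq> x0" by blast
    from no_fix_map[OF adj x0 x1(1)] x1 obtain g where
      g: "digitally_continuous X \<kappa> X \<kappa> g" "\<forall>x\<in>X. g x \<noteq> x" by metis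
    have "digitally_continuous (X \<times> {0..m}) (normal_prod_adj \<kappa>) X \<kappa> (\<lambda>(x,t). g x)"
      using g(1) unfolding digitally_continuous_def normal_prod_adj_def by auto
    then obtain p where p: "digital_path X \<kappa> m p" "\<forall>t\<in>{0..m}. g (p t) = p t"
      using F by fastforce
    have "p 0 \<in> X" using p(1) m0 unfolding digital_path_def digitally_continuous_def by auto
    with p(2) g(2) m0 show False by auto
  qed
next
  assume "\<exists>x. X = {x}"
  then obtain x where X: "X = {x}" by blast
  have path: "\<And>m. digital_path X \<kappa> m (\<lambda>t. x)"
    unfolding digital_path_def digitally_continuous_def X by auto
  have "fpp_wrt_interval X \<kappa> m"
    unfolding fpp_wrt_interval_def
  proof (intro allI impI)
    fix f assume f: "digitally_continuous (X \<times> {0..m}) (normal_prod_adj \<kappa>) X \<kappa> f"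
    have "\<forall>t\<in>{0..m}. f (x, t) = x"
      using f unfolding digitally_continuous_def X by auto
    then show "\<exists>p. digital_path X \<kappa> m p \<and> (\<forall>t\<in>{0..m}. f (p t, t) = p t)"
      using path by blast
  qed
  moreover have "homotopy_fpp X \<kappa>"
    unfolding homotopy_fpp_def
  proof (intro allI impI)
    fix m' :: int and F assume "m' \<ge> 1" and hF: "digital_homotopy X \<kappa> m' F"
    have "\<forall>t\<in>{0..m'}. F (x, t) = x"
      using hF unfolding digital_homotopy_def digitally_continuous_def X by auto
    then show "\<exists>p. digital_path X \<kappa> m' p \<and> (\<forall>t\<in>{0..m'}. F (p t, t) = p t)"
      using path by blast
  qed
  ultimately show "fpp_wrt_interval X \<kappa> m \<and> homotopy_fpp X \<kappa>" by blast
qed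

end
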